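(* Let $0\le\gamma_1<\dots<\gamma_p\le1$, $\boldsymbol\alpha=(\alpha_1,\dots,\alpha_p)\in(0,1)^p$ with $\sum_i\alpha_i=1$, and for each $i$ let $(\gamma_{i,n})_n$ be $[0,1]$-valued with $|\gamma_{i,n}-\gamma_i|=O(1/n)$. Let $\phi_{n,\boldsymbol\alpha,\boldsymbol\gamma_n}(u)=\sum_{i=1}^p\alpha_i\phi_{n,\gamma_{i,n}}(u)$. Then for every $i\in\{1,\dots,p\}$ there exists $\delta_i>0$ such that, whenever $\gamma_i-\delta_i<a<b<\gamma_i$ or $\gamma_i<b<a<\gamma_i+\delta_i$ (with $a,b\in(0,1)$), $\phi_{n,\boldsymbol\alpha,\boldsymbol\gamma_n}'(a)/\phi_{n,\boldsymbol\alpha,\boldsymbol\gamma_n}'(b)\to0$ as $n\to\infty$.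
   Context: $[x]$ is the integer part. $\phi_{n,\alpha}(t)=\sum_{j=1+[(n-1)\alpha]}^n\binom{n}{j}t^j(1-t)^{n-j}$, $t\in[0,1]$. *)

theory Defs
  imports "HOL-Analysis.Analysis"
begin

definition phi :: "nat \<Rightarrow> real \<Rightarrow> real \<Rightarrow> real" where
  "phi n a t = (\<Sum>j = nat (1 + \<lfloor>(real n - 1) * a\<rfloor>)..n.
      real (n choose j) * t ^ j * (1 - t) ^ (n - j))"

text \<open>phi_{n,alpha,gamma_n}(u) = sum_i alpha_i phi_{n,gamma_{i,n}}(u), indices 0..<p\<close>
definition phi_mix :: "nat \<Rightarrow> (nat \<Rightarrow> real) \<Rightarrow> (nat \<Rightarrow> nat \<Rightarrow> real) \<Rightarrow> nat \<Rightarrow> real \<Rightarrow> real" where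
  "phi_mix p \<alpha> \<gamma>n n u = (\<Sum>i<p. \<alpha> i * phi n (\<gamma>n i n) u)"

end

theory Submission
  imports Defs
begin


definition Bt :: "nat \<Rightarrow> nat \<Rightarrow> real \<Rightarrow> real" where
  "Bt N k u = real (N choose k) * u ^ k * (1 - u) ^ (N - k)"

lemma tail_deriv:
  assumes "1 \<le> k" "k \<le> n"
  shows "((\<lambda>t. \<Sum>j = k..n. real (n choose j) * t ^ j * (1 - t) ^ (n - j))
          has_real_derivative (real n * Bt (n - 1) (k - 1) t)) (at t)"
  using assms
proof (induction "n - k" arbitrary: k)
  case 0
  then have k: "k = n" by simp
  have "((\<lambda>t. t ^ n) has_real_derivative (real n * t ^ (n - 1))) (at t)"
    by (rule derivative_eq_intros refl | simp)+
  then show ?case using k by (simp add: Bt_def)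
next
  case (Suc d)
  then have kn: "k < n" by simp
  obtain k' where k': "k = Suc k'" using Suc.prems by (cases k) auto
  obtain r where r: "n - k = Suc r" using kn by (cases "n - k") auto
  have IH: "((\<lambda>t. \<Sum>j = Suc k..n. real (n choose j) * t ^ j * (1 - t) ^ (n - j))
          has_real_derivative (real n * Bt (n - 1) k t)) (at t)"
    using Suc.hyps(1)[of "Suc k"] Suc.hyps(2) kn by simp
  have split: "(\<lambda>t. \<Sum>j = k..n. real (n choose j) * t ^ j * (1 - t) ^ (n - j)) =
     (\<lambda>t. real (n choose k) * t ^ k * (1 - t) ^ (n - k) + (\<Sum>j = Suc k..n. real (n choose j) * t ^ j * (1 - t) ^ (n - j)))"
    using kn by (simp add: sum.atLeast_Suc_atMost)
  have T: "((\<lambda>t. real (n choose k) * t ^ k * (1 - t) ^ (n - k)) has_real_derivative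
     (real (n choose k) * (real k * t ^ k' * (1 - t) ^ Suc r - t ^ k * (real (Suc r) * (1 - t) ^ r)))) (at t)"
  proof -
    have fe: "(\<lambda>t. real (n choose k) * t ^ k * (1 - t) ^ (n - k)) = (\<lambda>t. real (n choose k) * t ^ Suc k' * (1 - t) ^ Suc r)"
      using k' r by simp
    show ?thesis unfolding fe
      by (rule derivative_eq_intros refl | simp)+ (simp add: algebra_simps k')
  qed
  have e1: "real k * real (n choose k) = real n * real ((n - 1) choose k')"
    using times_binomial_minus1_eq[of k n] k' by (metis Suc.prems(1) diff_Suc_1 le_imp_less_Suc less_Suc_eq_0_disj not_less_eq of_nat_mult zero_less_Suc)
  have e2: "real (Suc r) * real (n choose k) = real n * real ((n - 1) choose k)"
    using binomial_absorb_comp[of n k] r by (metis of_nat_mult)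
  have nk1: "n - 1 - k = r" "n - 1 - k' = Suc r" using r k' by auto
  have "real (n choose k) * (real k * t ^ k' * (1 - t) ^ Suc r - t ^ k * (real (Suc r) * (1 - t) ^ r))
        + real n * Bt (n - 1) k t = real n * Bt (n - 1) (k - 1) t"
  proof -
    have "real (n choose k) * (real k * t ^ k' * (1 - t) ^ Suc r - t ^ k * (real (Suc r) * (1 - t) ^ r))
       = (real k * real (n choose k)) * t ^ k' * (1 - t) ^ Suc r - (real (Suc r) * real (n choose k)) * t ^ k * (1 - t) ^ r"
      by (simp add: algebra_simps)
    also have "\<dots> = real n * real ((n - 1) choose k') * t ^ k' * (1 - t) ^ Suc r - real n * real ((n - 1) choose k) * t ^ k * (1 - t) ^ r"
      by (simp only: e1 e2)
    finally have X: "real (n choose k) * (real k * t ^ k' * (1 - t) ^ Suc r - t ^ k * (real (Suc r) * (1 - t) ^ r)) =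
      real n * real ((n - 1) choose k') * t ^ k' * (1 - t) ^ Suc r - real n * real ((n - 1) choose k) * t ^ k * (1 - t) ^ r" .
    have B1: "Bt (n - 1) k t = real ((n - 1) choose k) * t ^ k * (1 - t) ^ r"
      unfolding Bt_def using nk1 by simp
    have B2: "Bt (n - 1) (k - 1) t = real ((n - 1) choose k') * t ^ k' * (1 - t) ^ Suc r"
      unfolding Bt_def using nk1 k' by simp
    show ?thesis unfolding X B1 B2 by (simp add: mult.assoc)
  qed
  then show ?case unfolding split
    using DERIV_add[OF T IH] by simp
qed


lemma phi_deriv:
  assumes n: "1 \<le> n" and a: "0 \<le> a" "a \<le> 1"
  shows "(phi n a has_real_derivative (real n * Bt (n - 1) (nat \<lfloor>(real n - 1) * a\<rfloor>) t)) (at t)"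
proof -
  have f0: "0 \<le> \<lfloor>(real n - 1) * a\<rfloor>" using n a by simp
  have f1: "\<lfloor>(real n - 1) * a\<rfloor> \<le> int n - 1"
  proof -
    have "(real n - 1) * a \<le> real n - 1" using n a by (simp add: mult_left_le)
    then show ?thesis by (metis floor_mono floor_of_int of_int_1 of_int_diff of_int_of_nat_eq)
  qed
  define f where "f = \<lfloor>(real n - 1) * a\<rfloor>"
  define k where "k = nat (1 + \<lfloor>(real n - 1) * a\<rfloor>)"
  have k: "1 \<le> k" "k \<le> n" "k - 1 = nat \<lfloor>(real n - 1) * a\<rfloor>" using f0 f1 unfolding k_def f_def[symmetric] by auto
  have "phi n a = (\<lambda>t. \<Sum>j = k..n. real (n choose j) * t ^ j * (1 - t) ^ (n - j))"
    unfolding phi_def k_def by (rule ext) simp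
  then show ?thesis using tail_deriv[OF k(1,2), of t] k(3) by simp
qed

lemma phi_mix_deriv:
  assumes n: "1 \<le> n" and r: "\<And>i. i < p \<Longrightarrow> 0 \<le> \<gamma>n i n \<and> \<gamma>n i n \<le> 1"
  shows "deriv (phi_mix p \<alpha> \<gamma>n n) t =
     (\<Sum>i<p. \<alpha> i * (real n * Bt (n - 1) (nat \<lfloor>(real n - 1) * \<gamma>n i n\<rfloor>) t))"
proof -
  have "(phi_mix p \<alpha> \<gamma>n n has_real_derivative
     (\<Sum>i<p. \<alpha> i * (real n * Bt (n - 1) (nat \<lfloor>(real n - 1) * \<gamma>n i n\<rfloor>) t))) (at t)"
    unfolding phi_mix_def
    apply (rule DERIV_sum)
    apply (rule DERIV_cmult)
    using phi_deriv[OF n] r by auto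
  then show ?thesis by (rule DERIV_imp_deriv)
qed

lemma Bt_nonneg: "0 \<le> u \<Longrightarrow> u \<le> 1 \<Longrightarrow> 0 \<le> Bt N k u"
  unfolding Bt_def by simp

lemma Bt_pos: "0 < u \<Longrightarrow> u < 1 \<Longrightarrow> k \<le> N \<Longrightarrow> 0 < Bt N k u"
  unfolding Bt_def by simp

lemma Bt_sum: "(\<Sum>k\<le>N. Bt N k u) = 1"
  using binomial_ring[of u "1 - u" N] unfolding Bt_def by simp

lemma Bt_le1: "0 \<le> u \<Longrightarrow> u \<le> 1 \<Longrightarrow> k \<le> N \<Longrightarrow> Bt N k u \<le> 1"
proof -
  assume "0 \<le> u" "u \<le> 1" "k \<le> N"
  then have "Bt N k u \<le> (\<Sum>k\<le>N. Bt N k u)"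
    by (intro member_le_sum) (auto intro: Bt_nonneg)
  then show ?thesis by (simp add: Bt_sum)
qed

lemma Bt_step:
  assumes "l < N"
  shows "Bt N (Suc l) x * (real (Suc l) * (1 - x)) = Bt N l x * (real (N - l) * x)"
proof -
  have c: "real (Suc l) * real (N choose Suc l) = real (N - l) * real (N choose l)"
    using times_binomial_minus1_eq[of "Suc l" N] binomial_absorb_comp[of N l]
    by (metis diff_Suc_1 of_nat_mult zero_less_Suc)
  obtain r where r: "N - l = Suc r" using assms by (cases "N - l") auto
  have r2: "N - Suc l = r" using r by simp
  show ?thesis unfolding Bt_def r2 r
  proof -
    have "real (N choose Suc l) * x ^ Suc l * (1 - x) ^ r * (real (Suc l) * (1 - x))
        = (real (Suc l) * real (N choose Suc l)) * x ^ l * (1 - x) ^ Suc r * x" by (simp add: algebra_simps)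
    also have "\<dots> = (real (N - l) * real (N choose l)) * x ^ l * (1 - x) ^ Suc r * x" using c by simp
    finally show "real (N choose Suc l) * x ^ Suc l * (1 - x) ^ r * (real (Suc l) * (1 - x)) =
        real (N choose l) * x ^ l * (1 - x) ^ Suc r * (real (Suc r) * x)" using r by (simp add: algebra_simps)
  qed
qed

lemma Bt_mode:
  assumes N: "1 \<le> N" and k: "k \<le> N" and l: "l \<le> N"
  shows "Bt N l (real k / real N) \<le> Bt N k (real k / real N)"
proof -
  define x where "x = real k / real N"
  have x01: "0 \<le> x" "x \<le> 1" using N k unfolding x_def by auto
  have Nx: "real N * x = real k" using N unfolding x_def by simp
  have up: "Bt N m x \<le> Bt N (Suc m) x" if m: "m < k" for m
  proof -
    have mN: "m < N" using m k by simp
    have ineq: "real (Suc m) * (1 - x) \<le> real (N - m) * x"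
    proof -
      have "real N * (real (Suc m) * (1 - x)) \<le> real N * (real (N - m) * x)"
      proof -
        have "real N * (real (Suc m) * (1 - x)) = real (Suc m) * (real N - real k)"
          using Nx by (simp add: algebra_simps)
        also have "\<dots> \<le> real (N - m) * real k"
        proof -
          have h: "real N * (real (Suc m) - real k) \<le> 0"
            using m by (intro mult_nonneg_nonpos) auto
          have "real (N - m) = real N - real m" using mN by simp
          then show ?thesis using h by (simp add: algebra_simps)
        qed
        also have "\<dots> = real N * (real (N - m) * x)" using Nx by (simp add: algebra_simps)
        finally show ?thesis .
      qed
      then show ?thesis using N by (simp add: mult_le_cancel_left)
    qed
    have pos: "0 < real (N - m) * x" using mN m N unfolding x_def by auto
    have "Bt N m x * (real (N - m) * x) = Bt N (Suc m) x * (real (Suc m) * (1 - x))"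
      using Bt_step[OF mN] by simp
    also have "\<dots> \<le> Bt N (Suc m) x * (real (N - m) * x)"
      using ineq Bt_nonneg[OF x01] by (intro mult_left_mono) auto
    finally show ?thesis using pos by (meson mult_right_le_imp_le)
  qed
  have down: "Bt N (Suc m) x \<le> Bt N m x" if m: "k \<le> m" "m < N" for m
  proof -
    have kN: "k < N" using m by simp
    have ineq: "real (N - m) * x \<le> real (Suc m) * (1 - x)"
    proof -
      have "real N * (real (N - m) * x) \<le> real N * (real (Suc m) * (1 - x))"
      proof -
        have "real N * (real (N - m) * x) = (real N - real m) * real k"
          using Nx m by (simp add: algebra_simps of_nat_diff)
        also have "\<dots> \<le> real (Suc m) * (real N - real k)"
        proof -
          have h: "real N * (real k - real m) \<le> 0"
            using m by (intro mult_nonneg_nonpos) auto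
          then show ?thesis using k by (simp add: algebra_simps)
        qed
        also have "\<dots> = real N * (real (Suc m) * (1 - x))" using Nx by (simp add: algebra_simps)
        finally show ?thesis .
      qed
      then show ?thesis using N by (simp add: mult_le_cancel_left)
    qed
    have "x < 1" using kN N unfolding x_def by (simp add: field_simps)
    then have pos: "0 < real (Suc m) * (1 - x)" by simp
    have "Bt N (Suc m) x * (real (Suc m) * (1 - x)) = Bt N m x * (real (N - m) * x)"
      using Bt_step[OF m(2)] by simp
    also have "\<dots> \<le> Bt N m x * (real (Suc m) * (1 - x))"
      using ineq Bt_nonneg[OF x01] by (intro mult_left_mono) auto
    finally show ?thesis using pos by (meson mult_right_le_imp_le)
  qed
  show ?thesis
  proof (cases "l \<le> k")
    case True
    then show ?thesis
    proof (induction rule: inc_induct)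
      case base then show ?case by simp
    next
      case (step m) then show ?case using up[of m] unfolding x_def by simp
    qed
  next
    case False
    then have "k \<le> l" by simp
    then show ?thesis using l
    proof (induction rule: dec_induct)
      case base then show ?case by simp
    next
      case (step m) then show ?case using down[of m] unfolding x_def by simp
    qed
  qed
qed

lemma Bt_ge:
  assumes N: "1 \<le> N" and k: "k \<le> N"
  shows "1 / (real N + 1) \<le> Bt N k (real k / real N)"
proof -
  have "1 = (\<Sum>l\<le>N. Bt N l (real k / real N))" by (simp add: Bt_sum)
  also have "\<dots> \<le> (\<Sum>l\<le>N. Bt N k (real k / real N))"
    by (intro sum_mono Bt_mode[OF N k]) auto
  also have "\<dots> = (real N + 1) * Bt N k (real k / real N)" by simp
  finally show ?thesis by (simp add: field_simps add_pos_pos)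
qed


definition KL :: "real \<Rightarrow> real \<Rightarrow> real" where
  "KL x u = x * ln x + (1 - x) * ln (1 - x) - (x * ln u + (1 - x) * ln (1 - u))"

lemma pow_exp: "0 \<le> u \<Longrightarrow> (u = 0 \<Longrightarrow> k = 0) \<Longrightarrow> u ^ k = exp (real k * ln u)"
  by (cases "u = 0") (auto simp: exp_of_nat_mult)

lemma Bt_exp:
  assumes N: "1 \<le> N" and k: "k \<le> N" and u: "0 \<le> u" "u \<le> 1"
    and u0: "u = 0 \<Longrightarrow> k = 0" and u1: "u = 1 \<Longrightarrow> k = N"
  shows "Bt N k u = real (N choose k) *
     exp (real N * ((real k / real N) * ln u + (1 - real k / real N) * ln (1 - u)))"
proof -
  have a: "u ^ k = exp (real k * ln u)" using pow_exp u u0 by blast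
  have b: "(1 - u) ^ (N - k) = exp (real (N - k) * ln (1 - u))"
    using pow_exp[of "1 - u" "N - k"] u u1 by auto
  have c: "real N * ((real k / real N) * ln u + (1 - real k / real N) * ln (1 - u))
      = real k * ln u + real (N - k) * ln (1 - u)"
    using N k by (simp add: field_simps of_nat_diff)
  show ?thesis unfolding Bt_def a b c by (simp add: exp_add)
qed

lemma Bt_KL:
  assumes N: "1 \<le> N" and k: "k \<le> N" and u: "0 < u" "u < 1"
  shows "Bt N k u = Bt N k (real k / real N) * exp (- (real N * KL (real k / real N) u))"
proof -
  define x where "x = real k / real N"
  have x: "0 \<le> x" "x \<le> 1" "x = 0 \<Longrightarrow> k = 0" "x = 1 \<Longrightarrow> k = N"
    using N k unfolding x_def by (auto simp: field_simps)
  have e1: "Bt N k u = real (N choose k) * exp (real N * (x * ln u + (1 - x) * ln (1 - u)))"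
    using Bt_exp[OF N k] u unfolding x_def by simp
  have e2: "Bt N k x = real (N choose k) * exp (real N * (x * ln x + (1 - x) * ln (1 - x)))"
    using Bt_exp[OF N k x(1,2)] x(3,4) unfolding x_def by simp
  have "exp (real N * (x * ln u + (1 - x) * ln (1 - u))) =
     exp (real N * (x * ln x + (1 - x) * ln (1 - x))) * exp (- (real N * KL x u))"
    unfolding KL_def by (simp add: exp_add[symmetric] algebra_simps)
  then show ?thesis unfolding x_def[symmetric] e1 e2 by simp
qed

lemma Bt_ratio:
  assumes N: "1 \<le> N" and k: "k \<le> N" and l: "l \<le> N" and u: "0 < u" "u < 1" and v: "0 < v" "v < 1"
  shows "Bt N k u / Bt N l v \<le>
    (real N + 1) * exp (- (real N * (KL (real k / real N) u - KL (real l / real N) v)))"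
proof -
  have x01: "0 \<le> real k / real N" "real k / real N \<le> 1" using N k by auto
  have y01: "0 \<le> real l / real N" "real l / real N \<le> 1" using N l by auto
  have up: "Bt N k u \<le> exp (- (real N * KL (real k / real N) u))"
    using Bt_KL[OF N k u] Bt_le1[OF x01 k]
    by (simp add: mult_le_cancel_right1)
  have lo: "exp (- (real N * KL (real l / real N) v)) / (real N + 1) \<le> Bt N l v"
  proof -
    have "exp (- (real N * KL (real l / real N) v)) / (real N + 1) =
       (1 / (real N + 1)) * exp (- (real N * KL (real l / real N) v))" by simp
    also have "\<dots> \<le> Bt N l (real l / real N) * exp (- (real N * KL (real l / real N) v))"
      using Bt_ge[OF N l] by (intro mult_right_mono) auto
    finally show ?thesis using Bt_KL[OF N l v] by simp
  qed
  have lpos: "0 < exp (- (real N * KL (real l / real N) v)) / (real N + 1)" by simp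
  have "Bt N k u / Bt N l v \<le> exp (- (real N * KL (real k / real N) u)) /
      (exp (- (real N * KL (real l / real N) v)) / (real N + 1))"
    using up lo lpos Bt_nonneg[of u N k] u by (intro frac_le) auto
  also have "\<dots> = (real N + 1) * exp (- (real N * (KL (real k / real N) u - KL (real l / real N) v)))"
    by (simp add: exp_diff[symmetric] exp_minus field_simps algebra_simps)
  finally show ?thesis .
qed


definition hel :: "real \<Rightarrow> real \<Rightarrow> real" where
  "hel x a = (sqrt x - sqrt a)\<^sup>2 + (sqrt (1 - x) - sqrt (1 - a))\<^sup>2"

lemma xlog_term:
  assumes x: "0 \<le> x" and a: "0 < a"
  shows "2 * x - 2 * sqrt (x * a) \<le> x * ln x - x * ln a"
proof (cases "x = 0")
  case True then show ?thesis by simp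
next
  case False
  then have xp: "0 < x" using x by simp
  have "ln (a / x) = 2 * ln (sqrt (a / x))" using xp a by (simp add: ln_sqrt)
  also have "\<dots> \<le> 2 * (sqrt (a / x) - 1)" using ln_le_minus_one[of "sqrt (a / x)"] xp a by simp
  finally have h: "ln (a / x) \<le> 2 * (sqrt (a / x) - 1)" .
  have "x * sqrt (a / x) = sqrt (x * a)"
  proof -
    have "x * sqrt (a / x) = sqrt (x\<^sup>2) * sqrt (a / x)" using xp by simp
    also have "\<dots> = sqrt (x\<^sup>2 * (a / x))" by (rule real_sqrt_mult[symmetric])
    also have "x\<^sup>2 * (a / x) = x * a" using xp by (simp add: power2_eq_square)
    finally show ?thesis .
  qed
  moreover have "x * ln (a / x) \<le> x * (2 * (sqrt (a / x) - 1))" using h xp by (intro mult_left_mono) auto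
  moreover have "ln (a / x) = ln a - ln x" using xp a by (simp add: ln_div)
  ultimately show ?thesis by (simp add: algebra_simps)
qed

lemma KL_ge_hel:
  assumes x: "0 \<le> x" "x \<le> 1" and a: "0 < a" "a < 1"
  shows "hel x a \<le> KL x a"
proof -
  have t1: "2 * x - 2 * sqrt (x * a) \<le> x * ln x - x * ln a" using xlog_term x a by simp
  have t2: "2 * (1 - x) - 2 * sqrt ((1 - x) * (1 - a)) \<le> (1 - x) * ln (1 - x) - (1 - x) * ln (1 - a)"
    using xlog_term[of "1 - x" "1 - a"] x a by simp
  have q1: "(sqrt x)\<^sup>2 = x" "(sqrt a)\<^sup>2 = a" "(sqrt (1 - x))\<^sup>2 = 1 - x" "(sqrt (1 - a))\<^sup>2 = 1 - a"
    using x a by auto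
  have "hel x a = 2 - 2 * sqrt (x * a) - 2 * sqrt ((1 - x) * (1 - a))"
    unfolding hel_def real_sqrt_mult power2_diff q1 by (simp add: algebra_simps)
  then show ?thesis using t1 t2 unfolding KL_def by simp
qed

lemma hel_pos:
  assumes "0 \<le> x" "0 \<le> a" "x \<noteq> a"
  shows "0 < hel x a"
proof -
  have "sqrt x \<noteq> sqrt a" using assms by simp
  then have "0 < (sqrt x - sqrt a)\<^sup>2" by simp
  then show ?thesis unfolding hel_def by (simp add: add_pos_nonneg)
qed

lemma KL_self: "KL x x = 0"
  unfolding KL_def by simp

lemma isCont_hel: "isCont (hel x) a"
  unfolding hel_def by (intro continuous_intros)

lemma isCont_KL:
  assumes "0 \<le> x" "x \<le> 1"
  shows "isCont (KL x) x"
proof -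
  consider "x = 0" | "x = 1" | "0 < x \<and> x < 1" using assms by linarith
  then show ?thesis
  proof cases
    case 1
    then have "KL x = (\<lambda>u. - ln (1 - u))" unfolding KL_def by (auto intro!: ext)
    then show ?thesis using 1 by (auto intro!: continuous_intros)
  next
    case 2
    then have "KL x = (\<lambda>u. - ln u)" unfolding KL_def by (auto intro!: ext)
    then show ?thesis using 2 by (auto intro!: continuous_intros)
  next
    case 3
    then show ?thesis unfolding KL_def by (auto intro!: continuous_intros)
  qed
qed

lemma KL_mono:
  assumes x: "0 \<le> x" "x \<le> 1" and a: "0 < a" "a < 1" and b: "0 < b" "b < 1"
    and ord: "(a < b \<and> b \<le> x) \<or> (x \<le> b \<and> b < a)"
  shows "KL x b < KL x a"
proof -
  define c where "c = ln b - ln a - ln (1 - b) + ln (1 - a)"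
  have F: "KL x a - KL x b = (KL b a - KL b b) + (x - b) * c"
    unfolding KL_def c_def by (simp add: algebra_simps)
  have "a \<noteq> b" using ord by auto
  then have "0 < KL b a" using KL_ge_hel[of b a] hel_pos[of b a] a b by fastforce
  moreover have "0 \<le> (x - b) * c"
    using ord
  proof
    assume h: "a < b \<and> b \<le> x"
    then have "ln a < ln b" "ln (1 - b) < ln (1 - a)" using a b by auto
    then have "0 \<le> c" unfolding c_def by linarith
    then show ?thesis using h by simp
  next
    assume h: "x \<le> b \<and> b < a"
    then have "ln b < ln a" "ln (1 - a) < ln (1 - b)" using a b by auto
    then have "c \<le> 0" unfolding c_def by linarith
    then show ?thesis using h by (intro mult_nonpos_nonpos) auto
  qed
  ultimately show ?thesis using F KL_self by simp
qed

lemma xlnx_bound: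
  assumes "0 \<le> t" "t \<le> 1"
  shows "\<bar>t * ln t\<bar> \<le> 2 * sqrt t"
proof (cases "t = 0")
  case True then show ?thesis by simp
next
  case False
  then have tp: "0 < t" using assms by simp
  have neg: "t * ln t \<le> 0" using tp assms by (simp add: mult_nonneg_nonpos)
  have "ln t = - 2 * ln (1 / sqrt t)" using tp by (simp add: ln_sqrt ln_div)
  moreover have "ln (1 / sqrt t) \<le> 1 / sqrt t - 1" using tp by (intro ln_le_minus_one) simp
  ultimately have "- ln t \<le> 2 * (1 / sqrt t - 1)" by simp
  then have "- (t * ln t) \<le> t * (2 * (1 / sqrt t - 1))" using tp
    by (metis minus_mult_right mult_le_cancel_left_pos)
  also have "\<dots> \<le> 2 * sqrt t"
  proof -
    have "t / sqrt t = sqrt t" using tp by (metis real_div_sqrt less_imp_le)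
    moreover have "t * (2 * (1 / sqrt t - 1)) = 2 * (t / sqrt t) - 2 * t" by (simp add: algebra_simps)
    ultimately show ?thesis using tp by linarith
  qed
  finally show ?thesis using neg by simp
qed

lemma xlnx_tendsto:
  fixes f :: "nat \<Rightarrow> real"
  assumes nn: "\<And>n. 0 \<le> f n" and lim: "f \<longlonglongrightarrow> c"
  shows "(\<lambda>n. f n * ln (f n)) \<longlonglongrightarrow> c * ln c"
proof (cases "c = 0")
  case False
  then show ?thesis using lim by (intro tendsto_intros) auto
next
  case True
  have ev: "eventually (\<lambda>n. f n < 1) sequentially"
    using lim True by (intro order_tendstoD) auto
  have "eventually (\<lambda>n. norm (f n * ln (f n)) \<le> 2 * sqrt (f n)) sequentially"
    using ev by eventually_elim (use nn xlnx_bound in auto)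
  moreover have "(\<lambda>n. 2 * sqrt (f n)) \<longlonglongrightarrow> 0"
    using lim True tendsto_mult_right_zero tendsto_real_sqrt by fastforce
  ultimately have "(\<lambda>n. f n * ln (f n)) \<longlonglongrightarrow> 0" by (rule Lim_null_comparison)
  then show ?thesis using True by simp
qed

lemma KL_tendsto:
  fixes f :: "nat \<Rightarrow> real"
  assumes r: "\<And>n. 0 \<le> f n \<and> f n \<le> 1" and lim: "f \<longlonglongrightarrow> c"
  shows "(\<lambda>n. KL (f n) u) \<longlonglongrightarrow> KL c u"
proof -
  have a: "(\<lambda>n. f n * ln (f n)) \<longlonglongrightarrow> c * ln c" using xlnx_tendsto r lim by blast
  have b: "(\<lambda>n. (1 - f n) * ln (1 - f n)) \<longlonglongrightarrow> (1 - c) * ln (1 - c)"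
  proof -
    have "(\<lambda>n. 1 - f n) \<longlonglongrightarrow> 1 - c" using lim by (intro tendsto_intros)
    then show ?thesis using xlnx_tendsto[of "\<lambda>n. 1 - f n" "1 - c"] r by auto
  qed
  have d: "(\<lambda>n. f n * ln u + (1 - f n) * ln (1 - u)) \<longlonglongrightarrow> c * ln u + (1 - c) * ln (1 - u)"
    using lim by (intro tendsto_intros)
  show ?thesis unfolding KL_def by (rule tendsto_diff[OF tendsto_add[OF a b] d])
qed




lemma exp_neg_bound:
  fixes y :: real
  assumes "0 < y"
  shows "exp (- y) \<le> 1 / y"
proof -
  have "y \<le> exp y" using exp_ge_add_one_self[of y] by linarith
  then have "inverse (exp y) \<le> inverse y" using assms by (intro le_imp_inverse_le) auto
  then show ?thesis by (simp add: exp_minus divide_inverse)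
qed

lemma asymp1:
  assumes c: "0 < c"
  shows "(\<lambda>n::nat. real n * exp (- ((real n - 1) * c))) \<longlonglongrightarrow> 0"
proof (rule Lim_null_comparison)
  show "eventually (\<lambda>n. norm (real n * exp (- ((real n - 1) * c))) \<le> (4 * exp c / c\<^sup>2) / real n) sequentially"
    using eventually_gt_at_top[of "0::nat"]
  proof eventually_elim
    case (elim n)
    have y: "0 < real n * c / 2" using elim c by simp
    have e: "exp (- (real n * c / 2)) \<le> 1 / (real n * c / 2)" by (rule exp_neg_bound[OF y])
    have "exp (- (real n * c)) = exp (- (real n * c / 2)) ^ 2"
      by (simp add: power2_eq_square exp_add[symmetric])
    also have "\<dots> \<le> (1 / (real n * c / 2)) ^ 2" using e by (intro power_mono) auto
    finally have h: "exp (- (real n * c)) \<le> (1 / (real n * c / 2)) ^ 2" .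
    have "exp (- ((real n - 1) * c)) = exp c * exp (- (real n * c))"
      by (simp add: exp_add[symmetric] algebra_simps)
    then have "real n * exp (- ((real n - 1) * c)) \<le> real n * (exp c * (1 / (real n * c / 2)) ^ 2)"
      using h by (intro mult_left_mono) auto
    also have "\<dots> = (4 * exp c / c\<^sup>2) / real n" using elim c by (simp add: field_simps power2_eq_square)
    finally show ?case by simp
  qed
  show "(\<lambda>n. (4 * exp c / c\<^sup>2) / real n) \<longlonglongrightarrow> 0" by (rule lim_const_over_n)
qed

lemma asymp2: "(\<lambda>n::nat. 1 / (real n - 1)) \<longlonglongrightarrow> 0"
proof (rule Lim_null_comparison)
  show "eventually (\<lambda>n. norm (1 / (real n - 1)) \<le> 2 / real n) sequentially"
    using eventually_ge_at_top[of "2::nat"]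
    by eventually_elim (auto simp: field_simps)
  show "(\<lambda>n. 2 / real n) \<longlonglongrightarrow> 0" by (rule lim_const_over_n)
qed

lemma m_le:
  assumes g: "0 \<le> g" "g \<le> 1"
  shows "nat \<lfloor>(real n - 1) * g\<rfloor> \<le> n - 1"
proof (cases "n = 0")
  case True
  then have "\<lfloor>(real n - 1) * g\<rfloor> \<le> 0" using g by simp
  then show ?thesis by simp
next
  case False
  then have "(real n - 1) * g \<le> real n - 1" using g by (simp add: mult_left_le)
  also have "real n - 1 = real (n - 1)" using False by (simp add: of_nat_diff)
  finally have "\<lfloor>(real n - 1) * g\<rfloor> \<le> \<lfloor>real (n - 1)\<rfloor>" by (rule floor_mono)
  then have "\<lfloor>(real n - 1) * g\<rfloor> \<le> int (n - 1)" by simp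
  then show ?thesis by simp
qed

lemma x_close:
  assumes g: "0 \<le> g" "g \<le> 1" and n: "2 \<le> n"
  shows "\<bar>real (nat \<lfloor>(real n - 1) * g\<rfloor>) / real (n - 1) - g\<bar> \<le> 1 / (real n - 1)"
proof -
  define N where "N = real n - 1"
  have N: "1 \<le> N" "real (n - 1) = N" using n unfolding N_def by (auto simp: of_nat_diff)
  have y0: "0 \<le> N * g" using N g by simp
  have fl: "real (nat \<lfloor>N * g\<rfloor>) = of_int \<lfloor>N * g\<rfloor>" using y0 by simp
  have "\<bar>of_int \<lfloor>N * g\<rfloor> - N * g\<bar> \<le> 1"
    unfolding abs_le_iff using of_int_floor_le[of "N * g"] real_of_int_floor_gt_diff_one[of "N*g"] by linarith
  moreover have e: "of_int \<lfloor>N * g\<rfloor> / N - g = (of_int \<lfloor>N * g\<rfloor> - N * g) / N" using N by (simp add: field_simps)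
  moreover have "\<bar>(of_int \<lfloor>N * g\<rfloor> - N * g) / N\<bar> = \<bar>of_int \<lfloor>N * g\<rfloor> - N * g\<bar> / N"
    using N by (simp add: abs_divide)
  ultimately have "\<bar>of_int \<lfloor>N * g\<rfloor> / N - g\<bar> \<le> 1 / N"
    using N by (simp add: divide_right_mono)
  then show ?thesis unfolding N_def[symmetric] N(2) fl .
qed

lemma x_lim:
  assumes g: "\<And>n. 0 \<le> g n \<and> g n \<le> 1" and lim: "g \<longlonglongrightarrow> c"
  shows "(\<lambda>n. real (nat \<lfloor>(real n - 1) * g n\<rfloor>) / real (n - 1)) \<longlonglongrightarrow> c"
proof -
  have "(\<lambda>n. real (nat \<lfloor>(real n - 1) * g n\<rfloor>) / real (n - 1) - g n) \<longlonglongrightarrow> 0"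
  proof (rule Lim_null_comparison[OF _ asymp2])
    show "eventually (\<lambda>n. norm (real (nat \<lfloor>(real n - 1) * g n\<rfloor>) / real (n - 1) - g n) \<le> 1 / (real n - 1)) sequentially"
      using eventually_ge_at_top[of "2::nat"]
    proof eventually_elim
      case (elim n)
      have "0 \<le> g n" "g n \<le> 1" using g[of n] by auto
      from x_close[OF this elim] show ?case by (simp only: real_norm_def)
    qed
  qed
  from tendsto_add[OF this lim] show ?thesis by (simp only: diff_add_cancel add_0_left)
qed



lemma main_conv:
  fixes \<gamma> \<alpha> :: "nat \<Rightarrow> real" and \<gamma>n :: "nat \<Rightarrow> nat \<Rightarrow> real"
  assumes ip: "i < p"
    and \<alpha>_range: "\<And>j. j < p \<Longrightarrow> 0 < \<alpha> j"
    and \<gamma>n_range: "\<And>j n. j < p \<Longrightarrow> 0 \<le> \<gamma>n j n \<and> \<gamma>n j n \<le> 1"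
    and \<gamma>n_lim: "\<And>j. j < p \<Longrightarrow> (\<lambda>n. \<gamma>n j n) \<longlonglongrightarrow> \<gamma> j"
    and a: "0 < a" "a < 1" and b: "0 < b" "b < 1"
    and c: "\<And>j. j < p \<Longrightarrow> KL (\<gamma> i) b < KL (\<gamma> j) a"
  shows "(\<lambda>n. deriv (phi_mix p \<alpha> \<gamma>n n) a / deriv (phi_mix p \<alpha> \<gamma>n n) b) \<longlonglongrightarrow> 0"
proof -
  define m where "m j n = nat \<lfloor>(real n - 1) * \<gamma>n j n\<rfloor>" for j n
  define x where "x j n = real (m j n) / real (n - 1)" for j n
  have mle: "m j n \<le> n - 1" if "j < p" for j n
    unfolding m_def using m_le \<gamma>n_range[OF that] by blast
  have xr: "0 \<le> x j n \<and> x j n \<le> 1" if "j < p" for j n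
  proof (cases "n - 1 = 0")
    case True then show ?thesis unfolding x_def by simp
  next
    case False
    then show ?thesis unfolding x_def using mle[OF that, of n] by (simp add: divide_le_eq_1)
  qed
  have xl: "x j \<longlonglongrightarrow> \<gamma> j" if "j < p" for j
    unfolding x_def m_def using x_lim[of "\<gamma>n j" "\<gamma> j"] \<gamma>n_range[OF that] \<gamma>n_lim[OF that] by blast
  define T where "T j n = Bt (n - 1) (m j n) a / Bt (n - 1) (m i n) b" for j n
  have Tlim: "T j \<longlonglongrightarrow> 0" if jp: "j < p" for j
  proof -
    define cc where "cc = KL (\<gamma> j) a - KL (\<gamma> i) b"
    have cc: "0 < cc" unfolding cc_def using c[OF jp] by simp
    have D: "(\<lambda>n. KL (x j n) a - KL (x i n) b) \<longlonglongrightarrow> cc"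
      unfolding cc_def using KL_tendsto[OF xr[OF jp] xl[OF jp]] KL_tendsto[OF xr[OF ip] xl[OF ip]]
      by (intro tendsto_diff)
    have ev1: "eventually (\<lambda>n. cc / 2 < KL (x j n) a - KL (x i n) b) sequentially"
      using D cc by (intro order_tendstoD(1)) auto
    have "eventually (\<lambda>n. norm (T j n) \<le> real n * exp (- ((real n - 1) * (cc / 2)))) sequentially"
      using ev1 eventually_ge_at_top[of "2::nat"]
    proof eventually_elim
      case (elim n)
      have N: "1 \<le> n - 1" using elim by simp
      have rn: "real (n - 1) = real n - 1" "real (n - 1) + 1 = real n" using elim by (auto simp: of_nat_diff)
      have "T j n \<le> (real (n - 1) + 1) * exp (- (real (n - 1) * (KL (x j n) a - KL (x i n) b)))"
        unfolding T_def x_def by (rule Bt_ratio[OF N mle[OF jp] mle[OF ip] a b])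
      also have "\<dots> \<le> real n * exp (- ((real n - 1) * (cc / 2)))"
      proof -
        have "(real n - 1) * (cc / 2) \<le> (real n - 1) * (KL (x j n) a - KL (x i n) b)"
          using elim by (intro mult_left_mono) auto
        then have e: "exp (- (real (n - 1) * (KL (x j n) a - KL (x i n) b))) \<le> exp (- ((real n - 1) * (cc / 2)))"
          unfolding rn(1) by simp
        show ?thesis unfolding rn(2) using e by (intro mult_left_mono) auto
      qed
      finally have up: "T j n \<le> real n * exp (- ((real n - 1) * (cc / 2)))" .
      have "0 \<le> T j n" unfolding T_def using Bt_nonneg[of a] Bt_nonneg[of b] a b by (auto intro: divide_nonneg_nonneg)
      then show ?case using up by simp
    qed
    then show ?thesis by (rule Lim_null_comparison[OF _ asymp1]) (use cc in simp)
  qed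
  define r where "r n = deriv (phi_mix p \<alpha> \<gamma>n n) a / deriv (phi_mix p \<alpha> \<gamma>n n) b" for n
  have bounds: "eventually (\<lambda>n. 0 \<le> r n \<and> r n \<le> (\<Sum>j<p. (\<alpha> j / \<alpha> i) * T j n)) sequentially"
    using eventually_ge_at_top[of "2::nat"]
  proof eventually_elim
    case (elim n)
    have n1: "1 \<le> n" using elim by simp
    have np: "0 < real n" using elim by simp
    define Sa where "Sa = (\<Sum>j<p. \<alpha> j * (real n * Bt (n - 1) (m j n) a))"
    define Sb where "Sb = (\<Sum>j<p. \<alpha> j * (real n * Bt (n - 1) (m j n) b))"
    have rr: "r n = Sa / Sb" unfolding r_def Sa_def Sb_def m_def
      using phi_mix_deriv[OF n1 \<gamma>n_range] by simp
    have Sa0: "0 \<le> Sa" unfolding Sa_def using \<alpha>_range Bt_nonneg[of a] a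
      by (intro sum_nonneg mult_nonneg_nonneg) (auto intro: less_imp_le[OF \<alpha>_range])
    define db where "db = \<alpha> i * (real n * Bt (n - 1) (m i n) b)"
    have dbp: "0 < db" unfolding db_def using \<alpha>_range[OF ip] np Bt_pos[OF b mle[OF ip]] by simp
    have dbS: "db \<le> Sb" unfolding db_def Sb_def using ip \<alpha>_range Bt_nonneg[of b] b
      by (intro member_le_sum mult_nonneg_nonneg) (auto intro: less_imp_le[OF \<alpha>_range])
    have "r n \<le> Sa / db" unfolding rr using dbS Sa0 dbp by (intro divide_left_mono) auto
    also have "\<dots> = (\<Sum>j<p. (\<alpha> j / \<alpha> i) * T j n)"
      unfolding Sa_def sum_divide_distrib
    proof (rule sum.cong[OF refl])
      fix j assume "j \<in> {..<p}"
      show "\<alpha> j * (real n * Bt (n - 1) (m j n) a) / db = \<alpha> j / \<alpha> i * T j n"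
        unfolding db_def T_def using np \<alpha>_range[OF ip] by (simp add: field_simps)
    qed
    finally have up: "r n \<le> (\<Sum>j<p. (\<alpha> j / \<alpha> i) * T j n)" .
    have "0 \<le> r n" unfolding rr using Sa0 dbS dbp by simp
    then show ?case using up by simp
  qed
  have lim: "(\<lambda>n. \<Sum>j<p. (\<alpha> j / \<alpha> i) * T j n) \<longlonglongrightarrow> 0"
    by (intro tendsto_null_sum tendsto_mult_right_zero) (use Tlim in auto)
  have "r \<longlonglongrightarrow> 0"
    by (rule tendsto_sandwich[OF _ _ tendsto_const lim]) (use bounds in \<open>auto elim: eventually_mono\<close>)
  then show ?thesis unfolding r_def .
qed



theorem proposition5p2:
  fixes p :: nat and \<gamma> \<alpha> :: "nat \<Rightarrow> real" and \<gamma>n :: "nat \<Rightarrow> nat \<Rightarrow> real"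
  assumes \<gamma>_range: "\<And>i. i < p \<Longrightarrow> 0 \<le> \<gamma> i \<and> \<gamma> i \<le> 1"
    and \<gamma>_strict: "\<And>i j. i < j \<Longrightarrow> j < p \<Longrightarrow> \<gamma> i < \<gamma> j"
    and \<alpha>_range: "\<And>i. i < p \<Longrightarrow> 0 < \<alpha> i \<and> \<alpha> i < 1"
    and \<alpha>_sum: "(\<Sum>i<p. \<alpha> i) = 1"
    and \<gamma>n_range: "\<And>i n. i < p \<Longrightarrow> 0 \<le> \<gamma>n i n \<and> \<gamma>n i n \<le> 1"
    and \<gamma>n_rate: "\<And>i. i < p \<Longrightarrow> (\<lambda>n. \<gamma>n i n - \<gamma> i) \<in> O(\<lambda>n. 1 / real n)"
  shows "\<forall>i<p. \<exists>\<delta>>0. \<forall>a b. 0 < a \<and> a < 1 \<and> 0 < b \<and> b < 1 \<and>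
           ((\<gamma> i - \<delta> < a \<and> a < b \<and> b < \<gamma> i) \<or> (\<gamma> i < b \<and> b < a \<and> a < \<gamma> i + \<delta>)) \<longrightarrow>
           (\<lambda>n. deriv (phi_mix p \<alpha> \<gamma>n n) a / deriv (phi_mix p \<alpha> \<gamma>n n) b) \<longlonglongrightarrow> 0"
proof (intro allI impI)
  fix i assume ip: "i < p"
  have \<gamma>n_lim: "(\<lambda>n. \<gamma>n j n) \<longlonglongrightarrow> \<gamma> j" if jp: "j < p" for j
  proof -
    from \<gamma>n_rate[OF jp] obtain C where C: "C > 0"
      "eventually (\<lambda>n. norm (\<gamma>n j n - \<gamma> j) \<le> C * norm (1 / real n)) sequentially"
      by (elim landau_o.bigE)
    have "(\<lambda>n. \<gamma>n j n - \<gamma> j) \<longlonglongrightarrow> 0"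
    proof (rule Lim_null_comparison)
      show "eventually (\<lambda>n. norm (\<gamma>n j n - \<gamma> j) \<le> C / real n) sequentially"
        using C(2) by eventually_elim simp
      show "(\<lambda>n. C / real n) \<longlonglongrightarrow> 0" by (rule lim_const_over_n)
    qed
    from tendsto_add[OF this tendsto_const[of "\<gamma> j"]] show ?thesis by simp
  qed
  have neq: "\<gamma> j \<noteq> \<gamma> i" if "j < p" "j \<noteq> i" for j
  proof (cases "j < i")
    case True then show ?thesis using \<gamma>_strict[of j i] ip by simp
  next
    case False then have "i < j" using that by simp
    then show ?thesis using \<gamma>_strict[of i j] that by simp
  qed
  have gi: "0 \<le> \<gamma> i" "\<gamma> i \<le> 1" using \<gamma>_range[OF ip] by auto
  have ev: "eventually (\<lambda>a. \<forall>j\<in>{..<p} - {i}. KL (\<gamma> i) a < hel (\<gamma> j) a) (at (\<gamma> i))"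
  proof (rule eventually_ball_finite)
    show "finite ({..<p} - {i})" by simp
    show "\<forall>j\<in>{..<p} - {i}. eventually (\<lambda>a. KL (\<gamma> i) a < hel (\<gamma> j) a) (at (\<gamma> i))"
    proof
      fix j assume j: "j \<in> {..<p} - {i}"
      have jp: "j < p" "j \<noteq> i" using j by auto
      have cont: "isCont (\<lambda>a. hel (\<gamma> j) a - KL (\<gamma> i) a) (\<gamma> i)"
        using isCont_hel isCont_KL[OF gi] by (rule isCont_diff)
      have pos: "0 < hel (\<gamma> j) (\<gamma> i) - KL (\<gamma> i) (\<gamma> i)"
        using hel_pos[of "\<gamma> j" "\<gamma> i"] \<gamma>_range[OF jp(1)] gi neq[OF jp] by (simp add: KL_self)
      have "((\<lambda>a. hel (\<gamma> j) a - KL (\<gamma> i) a) \<longlongrightarrow> hel (\<gamma> j) (\<gamma> i) - KL (\<gamma> i) (\<gamma> i)) (at (\<gamma> i))"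
        using cont by (simp add: isCont_def)
      from order_tendstoD(1)[OF this pos]
      show "eventually (\<lambda>a. KL (\<gamma> i) a < hel (\<gamma> j) a) (at (\<gamma> i))"
        by eventually_elim simp
    qed
  qed
  then obtain \<delta> where \<delta>: "\<delta> > 0"
    "\<And>a. a \<noteq> \<gamma> i \<Longrightarrow> dist a (\<gamma> i) < \<delta> \<Longrightarrow> \<forall>j\<in>{..<p} - {i}. KL (\<gamma> i) a < hel (\<gamma> j) a"
    unfolding eventually_at by auto
  show "\<exists>\<delta>>0. \<forall>a b. 0 < a \<and> a < 1 \<and> 0 < b \<and> b < 1 \<and>
           ((\<gamma> i - \<delta> < a \<and> a < b \<and> b < \<gamma> i) \<or> (\<gamma> i < b \<and> b < a \<and> a < \<gamma> i + \<delta>)) \<longrightarrow>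
           (\<lambda>n. deriv (phi_mix p \<alpha> \<gamma>n n) a / deriv (phi_mix p \<alpha> \<gamma>n n) b) \<longlonglongrightarrow> 0"
  proof (intro exI[of _ \<delta>] conjI allI impI)
    show "0 < \<delta>" by (rule \<delta>(1))
    fix a b
    assume H: "0 < a \<and> a < 1 \<and> 0 < b \<and> b < 1 \<and>
           ((\<gamma> i - \<delta> < a \<and> a < b \<and> b < \<gamma> i) \<or> (\<gamma> i < b \<and> b < a \<and> a < \<gamma> i + \<delta>))"
    have a: "0 < a" "a < 1" and b: "0 < b" "b < 1" using H by auto
    have ane: "a \<noteq> \<gamma> i" "dist a (\<gamma> i) < \<delta>" using H by (auto simp: dist_real_def)
    have mono: "KL (\<gamma> i) b < KL (\<gamma> i) a"
      using H by (intro KL_mono[OF gi a b]) auto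
    have c: "KL (\<gamma> i) b < KL (\<gamma> j) a" if jp: "j < p" for j
    proof (cases "j = i")
      case True then show ?thesis using mono by simp
    next
      case False
      have "KL (\<gamma> i) a < hel (\<gamma> j) a" using \<delta>(2)[OF ane] jp False by auto
      also have "\<dots> \<le> KL (\<gamma> j) a" using KL_ge_hel[OF _ _ a] \<gamma>_range[OF jp] by auto
      finally show ?thesis using mono by simp
    qed
    show "(\<lambda>n. deriv (phi_mix p \<alpha> \<gamma>n n) a / deriv (phi_mix p \<alpha> \<gamma>n n) b) \<longlonglongrightarrow> 0"
    proof (rule main_conv[where \<gamma>=\<gamma> and i=i, OF ip])
      show "\<And>j. j < p \<Longrightarrow> 0 < \<alpha> j" using \<alpha>_range by blast
    qed (use \<gamma>n_range \<gamma>n_lim a b c in auto)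
  qed
qed


end
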